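(* Let $\{p_\sigma\}$ and $\{p'_\sigma\}$ be two systems of probability parameters indexed by the non-empty proper subsets $\sigma\subsetneq[n]$, with $p_\sigma\le p'_\sigma$ for all $\sigma$. Let $\underline{\mathbb P}_n,\underline{\mathbb P}'_n$ be the lower measures and $\overline{\mathbb P}_n,\overline{\mathbb P}'_n$ the upper measures on the set of simplicial subcomplexes of $\Delta_n$ associated to $\{p_\sigma\}$ and $\{p'_\sigma\}$ respectively. Let $\mathfrak P$ denote the set of pairs $(X,Y)$ of simplicial complexes $Y\subseteq X\subseteq\Delta_n$, with projections $\pi_1(X,Y)=X$, $\pi_2(X,Y)=Y$. (A) There exists a probability measure $\underline\mu$ on $\mathfrak P$ with $(\pi_1)_*\underline\mu=\underline{\mathbb P}'_n$ and $(\pi_2)_*\underline\mu=\underline{\mathbb P}_n$, and there exists a probability measure $\overline\mu$ on $\mathfrak P$ with $(\pi_1)_*\overline\mu=\overline{\mathbb P}'_n$ and $(\pi_2)_*\overline\mu=\overline{\mathbb P}_n$. (B) If additionally $p_\sigma=p'_\sigma$ for every simplex $\sigma$ of dimension $\le k$ (for an integer $k\ge0$), then $\underline\mu$ in (A) can be taken supported on pairs $(X,Y)$ with identical $k$-skeleta, $X^{(k)}=Y^{(k)}$. (C) If additionally $p_\sigma=p'_\sigma$ for every simplex $\sigma$ of dimension $>k$ (for a fixed integer $k$), then $\overline\mu$ in (A) can be taken supported on pairs $(X,Y)$ with $X-X^{(k)}=Y-Y^{(k)}$, i.e. $X$ and $Y$ have the same simplexes of dimension $>k$.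
   Context: $[n]=\{0,\dots,n\}$, $\Delta_n$ is the simplex consisting of all non-empty subsets of $[n]$; a simplex $\sigma$ has dimension $|\sigma|-1$. Given parameters $p_\sigma\in[0,1]$ for non-empty proper subsets $\sigma\subsetneq[n]$, let $X$ be the random hypergraph containing each such $\sigma$ independently with probability $p_\sigma$. The lower measure is the law of the largest simplicial complex contained in $X$ ($\sigma$ included iff all its non-empty subsets lie in $X$); the upper measure is the law of the smallest simplicial complex containing $X$ ($\sigma$ included iff some superset of $\sigma$ lies in $X$). $X^{(k)}$ denotes the $k$-skeleton. *)

theory Defs
  imports "HOL-Probability.Probability"
begin

definition simplices :: "nat \<Rightarrow> nat set set" where
  "simplices n = {\<sigma>. \<sigma> \<noteq> {} \<and> \<sigma> \<subseteq> {0..n}}"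

definition proper_simplices :: "nat \<Rightarrow> nat set set" where
  "proper_simplices n = {\<sigma>. \<sigma> \<noteq> {} \<and> \<sigma> \<subset> {0..n}}"

definition sdim :: "nat set \<Rightarrow> int" where
  "sdim \<sigma> = int (card \<sigma>) - 1"

definition is_subcomplex :: "nat \<Rightarrow> nat set set \<Rightarrow> bool" where
  "is_subcomplex n X \<longleftrightarrow> X \<subseteq> simplices n \<and>
     (\<forall>\<sigma>\<in>X. \<forall>\<tau>. \<tau> \<noteq> {} \<and> \<tau> \<subseteq> \<sigma> \<longrightarrow> \<tau> \<in> X)"

definition skeleton :: "int \<Rightarrow> nat set set \<Rightarrow> nat set set" where
  "skeleton k X = {\<sigma>\<in>X. sdim \<sigma> \<le> k}"

definition random_hypergraph :: "nat \<Rightarrow> (nat set \<Rightarrow> real) \<Rightarrow> nat set set pmf" where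
  "random_hypergraph n p =
     map_pmf (\<lambda>f. {\<sigma>\<in>proper_simplices n. f \<sigma>})
       (Pi_pmf (proper_simplices n) False (\<lambda>\<sigma>. bernoulli_pmf (p \<sigma>)))"

text \<open>Largest simplicial complex contained in X.\<close>
definition lower_complex :: "nat \<Rightarrow> nat set set \<Rightarrow> nat set set" where
  "lower_complex n X = {\<sigma>\<in>simplices n. \<forall>\<tau>. \<tau> \<noteq> {} \<and> \<tau> \<subseteq> \<sigma> \<longrightarrow> \<tau> \<in> X}"

text \<open>Smallest simplicial complex containing X.\<close>
definition upper_complex :: "nat \<Rightarrow> nat set set \<Rightarrow> nat set set" where
  "upper_complex n X = {\<sigma>\<in>simplices n. \<exists>\<tau>\<in>X. \<sigma> \<subseteq> \<tau>}"

definition lower_measure :: "nat \<Rightarrow> (nat set \<Rightarrow> real) \<Rightarrow> nat set set pmf" where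
  "lower_measure n p = map_pmf (lower_complex n) (random_hypergraph n p)"

definition upper_measure :: "nat \<Rightarrow> (nat set \<Rightarrow> real) \<Rightarrow> nat set set pmf" where
  "upper_measure n p = map_pmf (upper_complex n) (random_hypergraph n p)"

definition pair_space :: "nat \<Rightarrow> (nat set set \<times> nat set set) set" where
  "pair_space n = {(X, Y). is_subcomplex n X \<and> is_subcomplex n Y \<and> Y \<subseteq> X}"

definition is_coupling :: "nat \<Rightarrow> nat set set pmf \<Rightarrow> nat set set pmf
    \<Rightarrow> (nat set set \<times> nat set set) pmf \<Rightarrow> bool" where
  "is_coupling n P' P \<mu> \<longleftrightarrow> set_pmf \<mu> \<subseteq> pair_space n \<and>
     map_pmf fst \<mu> = P' \<and> map_pmf snd \<mu> = P"

end

theory Submission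
  imports Defs
begin

definition cpl :: "real \<Rightarrow> real \<Rightarrow> (bool \<times> bool) pmf" where
  "cpl a b = bind_pmf (bernoulli_pmf b)
     (\<lambda>x. if x then map_pmf (Pair True) (bernoulli_pmf (a / b)) else return_pmf (False, False))"

definition cpl2 :: "real \<Rightarrow> real \<Rightarrow> (bool \<times> bool) pmf" where
  "cpl2 a b = (if a = b then map_pmf (\<lambda>x. (x, x)) (bernoulli_pmf a) else cpl a b)"

lemma cpl_fst: "map_pmf fst (cpl a b) = bernoulli_pmf b"
proof -
  have h: "(\<lambda>x::bool. if x then return_pmf True else return_pmf False) = return_pmf" by (rule ext) simp
  show ?thesis unfolding cpl_def map_bind_pmf
    by (simp add: if_distrib map_pmf_comp h bind_return_pmf' cong: if_cong)
qed

lemma cpl_snd: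
  assumes "0 \<le> a" "a \<le> b" "b \<le> 1"
  shows "map_pmf snd (cpl a b) = bernoulli_pmf a"
proof -
  have ab: "0 \<le> a / b" "a / b \<le> 1" using assms by (auto simp: divide_le_eq)
  have e: "map_pmf snd (cpl a b) = bind_pmf (bernoulli_pmf b)
      (\<lambda>x. if x then bernoulli_pmf (a / b) else return_pmf False)"
    unfolding cpl_def map_bind_pmf
    by (simp add: if_distrib map_pmf_comp cong: if_cong)
  show ?thesis unfolding e
  proof (rule pmf_eqI)
    fix i :: bool
    show "pmf (bind_pmf (bernoulli_pmf b) (\<lambda>x. if x then bernoulli_pmf (a / b) else return_pmf False)) i
        = pmf (bernoulli_pmf a) i"
      using assms ab by (cases i; cases "b = 0") (auto simp: pmf_bind field_simps)
  qed
qed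

lemma cpl_set: "set_pmf (cpl a b) \<subseteq> {(x, y). y \<longrightarrow> x}"
  unfolding cpl_def by (auto split: if_splits)

lemma cpl2_fst: "map_pmf fst (cpl2 a b) = bernoulli_pmf b"
  by (simp add: cpl2_def cpl_fst map_pmf_comp)

lemma cpl2_snd: "0 \<le> a \<Longrightarrow> a \<le> b \<Longrightarrow> b \<le> 1 \<Longrightarrow> map_pmf snd (cpl2 a b) = bernoulli_pmf a"
  by (simp add: cpl2_def cpl_snd map_pmf_comp)

lemma cpl2_set: "set_pmf (cpl2 a b) \<subseteq> {(x, y). y \<longrightarrow> x}"
  using cpl_set by (auto simp: cpl2_def)

lemma cpl2_set_eq: "a = b \<Longrightarrow> set_pmf (cpl2 a b) \<subseteq> {(x, y). x = y}"
  by (auto simp: cpl2_def)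

lemma finite_S: "finite (proper_simplices n)"
proof -
  have "proper_simplices n \<subseteq> Pow {0..n}" by (auto simp: proper_simplices_def)
  then show ?thesis by (rule finite_subset) simp
qed

lemma finite_simp: "\<sigma> \<in> simplices n \<Longrightarrow> finite \<sigma>"
  by (auto simp: simplices_def intro: finite_subset)

lemma finite_psimp: "\<sigma> \<in> proper_simplices n \<Longrightarrow> finite \<sigma>"
  by (auto simp: proper_simplices_def intro: finite_subset)

lemma sdim_mono: "finite \<tau> \<Longrightarrow> \<sigma> \<subseteq> \<tau> \<Longrightarrow> sdim \<sigma> \<le> sdim \<tau>"
  unfolding sdim_def using card_mono[of \<tau> \<sigma>] by simp

lemma lower_sub: "is_subcomplex n (lower_complex n A)"
  unfolding is_subcomplex_def lower_complex_def simplices_def by auto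

lemma upper_sub: "is_subcomplex n (upper_complex n A)"
  unfolding is_subcomplex_def upper_complex_def simplices_def by auto

lemma lower_mono: "A \<subseteq> B \<Longrightarrow> lower_complex n A \<subseteq> lower_complex n B"
  unfolding lower_complex_def by auto

lemma upper_mono: "A \<subseteq> B \<Longrightarrow> upper_complex n A \<subseteq> upper_complex n B"
  unfolding upper_complex_def by auto

lemma lower_skel_half:
  assumes "A \<subseteq> proper_simplices n"
    and "\<And>\<sigma>. \<sigma> \<in> proper_simplices n \<Longrightarrow> sdim \<sigma> \<le> k \<Longrightarrow> \<sigma> \<in> A \<Longrightarrow> \<sigma> \<in> B"
  shows "skeleton k (lower_complex n A) \<subseteq> skeleton k (lower_complex n B)"
proof
  fix \<sigma> assume s: "\<sigma> \<in> skeleton k (lower_complex n A)"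
  then have fs: "finite \<sigma>" "sdim \<sigma> \<le> k" "\<sigma> \<in> simplices n"
    by (auto simp: skeleton_def lower_complex_def intro: finite_simp)
  have "\<tau> \<in> B" if "\<tau> \<noteq> {}" "\<tau> \<subseteq> \<sigma>" for \<tau>
  proof -
    have "\<tau> \<in> A" using s that by (auto simp: skeleton_def lower_complex_def)
    moreover have "sdim \<tau> \<le> k" using sdim_mono[OF fs(1) that(2)] fs(2) by simp
    ultimately show ?thesis using assms by auto
  qed
  then show "\<sigma> \<in> skeleton k (lower_complex n B)"
    using fs by (auto simp: skeleton_def lower_complex_def)
qed

lemma upper_skel_half:
  assumes "A \<subseteq> proper_simplices n"
    and "\<And>\<sigma>. \<sigma> \<in> proper_simplices n \<Longrightarrow> sdim \<sigma> > k \<Longrightarrow> \<sigma> \<in> A \<Longrightarrow> \<sigma> \<in> B"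
  shows "upper_complex n A - skeleton k (upper_complex n A)
     \<subseteq> upper_complex n B - skeleton k (upper_complex n B)"
proof
  fix \<sigma> assume s: "\<sigma> \<in> upper_complex n A - skeleton k (upper_complex n A)"
  then obtain \<tau> where t: "\<tau> \<in> A" "\<sigma> \<subseteq> \<tau>" "\<sigma> \<in> simplices n" "sdim \<sigma> > k"
    by (auto simp: skeleton_def upper_complex_def)
  have tS: "\<tau> \<in> proper_simplices n" using t(1) assms(1) by blast
  then have "finite \<tau>" by (rule finite_psimp)
  then have "sdim \<tau> > k" using sdim_mono[of \<tau> \<sigma>] t(2,4) by simp
  then have "\<tau> \<in> B" using t(1) tS assms(2) by blast
  then show "\<sigma> \<in> upper_complex n B - skeleton k (upper_complex n B)"
    using t by (auto simp: skeleton_def upper_complex_def)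
qed

definition JJ :: "nat \<Rightarrow> (nat set \<Rightarrow> real) \<Rightarrow> (nat set \<Rightarrow> real) \<Rightarrow> (nat set \<Rightarrow> bool \<times> bool) pmf" where
  "JJ n p p' = Pi_pmf (proper_simplices n) (False, False) (\<lambda>\<sigma>. cpl2 (p \<sigma>) (p' \<sigma>))"

lemma JJ_fst: "map_pmf (\<lambda>h. {\<sigma>\<in>proper_simplices n. fst (h \<sigma>)}) (JJ n p p') = random_hypergraph n p'"
proof -
  have "Pi_pmf (proper_simplices n) False (\<lambda>\<sigma>. bernoulli_pmf (p' \<sigma>))
      = Pi_pmf (proper_simplices n) False (\<lambda>\<sigma>. map_pmf fst (cpl2 (p \<sigma>) (p' \<sigma>)))"
    by (simp add: cpl2_fst)
  also have "\<dots> = map_pmf (\<lambda>h. fst \<circ> h) (JJ n p p')"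
    unfolding JJ_def by (rule Pi_pmf_map) (auto simp: finite_S)
  finally show ?thesis unfolding random_hypergraph_def by (simp add: map_pmf_comp)
qed

lemma JJ_snd:
  assumes "\<And>\<sigma>. \<sigma> \<in> proper_simplices n \<Longrightarrow> 0 \<le> p \<sigma> \<and> p \<sigma> \<le> p' \<sigma> \<and> p' \<sigma> \<le> 1"
  shows "map_pmf (\<lambda>h. {\<sigma>\<in>proper_simplices n. snd (h \<sigma>)}) (JJ n p p') = random_hypergraph n p"
proof -
  have "Pi_pmf (proper_simplices n) False (\<lambda>\<sigma>. bernoulli_pmf (p \<sigma>))
      = Pi_pmf (proper_simplices n) False (\<lambda>\<sigma>. map_pmf snd (cpl2 (p \<sigma>) (p' \<sigma>)))"
    by (rule Pi_pmf_cong) (auto simp: cpl2_snd assms)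
  also have "\<dots> = map_pmf (\<lambda>h. snd \<circ> h) (JJ n p p')"
    unfolding JJ_def by (rule Pi_pmf_map) (auto simp: finite_S)
  finally show ?thesis unfolding random_hypergraph_def by (simp add: map_pmf_comp)
qed

lemma JJ_set: "h \<in> set_pmf (JJ n p p') \<Longrightarrow> \<sigma> \<in> proper_simplices n \<Longrightarrow> h \<sigma> \<in> set_pmf (cpl2 (p \<sigma>) (p' \<sigma>))"
  unfolding JJ_def by (auto simp: set_Pi_pmf finite_S PiE_dflt_def)

definition MU where
  "MU n p p' F = map_pmf (\<lambda>h. (F {\<sigma>\<in>proper_simplices n. fst (h \<sigma>)}, F {\<sigma>\<in>proper_simplices n. snd (h \<sigma>)})) (JJ n p p')"

lemma MU_fst: "map_pmf fst (MU n p p' F) = map_pmf F (random_hypergraph n p')"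
proof -
  have "map_pmf F (random_hypergraph n p') = map_pmf F (map_pmf (\<lambda>h. {\<sigma>\<in>proper_simplices n. fst (h \<sigma>)}) (JJ n p p'))"
    by (simp only: JJ_fst)
  then show ?thesis by (simp add: MU_def map_pmf_comp)
qed

lemma MU_snd:
  assumes "\<And>\<sigma>. \<sigma> \<in> proper_simplices n \<Longrightarrow> 0 \<le> p \<sigma> \<and> p \<sigma> \<le> p' \<sigma> \<and> p' \<sigma> \<le> 1"
  shows "map_pmf snd (MU n p p' F) = map_pmf F (random_hypergraph n p)"
proof -
  have "map_pmf F (random_hypergraph n p) = map_pmf F (map_pmf (\<lambda>h. {\<sigma>\<in>proper_simplices n. snd (h \<sigma>)}) (JJ n p p'))"
    by (simp only: JJ_snd[OF assms])
  then show ?thesis by (simp add: MU_def map_pmf_comp)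
qed

lemma MU_set:
  assumes "xy \<in> set_pmf (MU n p p' F)"
  obtains A B where "xy = (F B, F A)" "A \<subseteq> B" "B \<subseteq> proper_simplices n"
    "\<And>\<sigma>. \<sigma> \<in> proper_simplices n \<Longrightarrow> p \<sigma> = p' \<sigma> \<Longrightarrow> (\<sigma> \<in> A \<longleftrightarrow> \<sigma> \<in> B)"
proof -
  obtain h where h: "h \<in> set_pmf (JJ n p p')"
    "xy = (F {\<sigma>\<in>proper_simplices n. fst (h \<sigma>)}, F {\<sigma>\<in>proper_simplices n. snd (h \<sigma>)})"
    using assms unfolding MU_def by auto
  have 1: "{\<sigma>\<in>proper_simplices n. snd (h \<sigma>)} \<subseteq> {\<sigma>\<in>proper_simplices n. fst (h \<sigma>)}"
    using JJ_set[OF h(1)] cpl2_set by fastforce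
  have 2: "\<sigma> \<in> {\<sigma>\<in>proper_simplices n. snd (h \<sigma>)} \<longleftrightarrow> \<sigma> \<in> {\<sigma>\<in>proper_simplices n. fst (h \<sigma>)}"
    if "\<sigma> \<in> proper_simplices n" "p \<sigma> = p' \<sigma>" for \<sigma>
    using JJ_set[OF h(1) that(1)] cpl2_set_eq[OF that(2)] by fastforce
  show ?thesis using that[OF h(2) 1 _ 2] by blast
qed

theorem theorem4p1:
  fixes n :: nat and p p' :: "nat set \<Rightarrow> real"
  assumes p_range: "\<And>\<sigma>. \<sigma> \<in> proper_simplices n \<Longrightarrow> 0 \<le> p \<sigma> \<and> p \<sigma> \<le> 1"
    and p'_range: "\<And>\<sigma>. \<sigma> \<in> proper_simplices n \<Longrightarrow> 0 \<le> p' \<sigma> \<and> p' \<sigma> \<le> 1"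
    and mono: "\<And>\<sigma>. \<sigma> \<in> proper_simplices n \<Longrightarrow> p \<sigma> \<le> p' \<sigma>"
  shows "(\<exists>\<mu>. is_coupling n (lower_measure n p') (lower_measure n p) \<mu>)
    \<and> (\<exists>\<mu>. is_coupling n (upper_measure n p') (upper_measure n p) \<mu>)
    \<and> (\<forall>k::int. k \<ge> 0 \<longrightarrow>
         (\<forall>\<sigma>\<in>proper_simplices n. sdim \<sigma> \<le> k \<longrightarrow> p \<sigma> = p' \<sigma>) \<longrightarrow>
         (\<exists>\<mu>. is_coupling n (lower_measure n p') (lower_measure n p) \<mu> \<and>
              (\<forall>(X, Y)\<in>set_pmf \<mu>. skeleton k X = skeleton k Y)))
    \<and> (\<forall>k::int.
         (\<forall>\<sigma>\<in>proper_simplices n. sdim \<sigma> > k \<longrightarrow> p \<sigma> = p' \<sigma>) \<longrightarrow>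
         (\<exists>\<mu>. is_coupling n (upper_measure n p') (upper_measure n p) \<mu> \<and>
              (\<forall>(X, Y)\<in>set_pmf \<mu>. X - skeleton k X = Y - skeleton k Y)))"
proof -
  have r: "\<And>\<sigma>. \<sigma> \<in> proper_simplices n \<Longrightarrow> 0 \<le> p \<sigma> \<and> p \<sigma> \<le> p' \<sigma> \<and> p' \<sigma> \<le> 1"
    using p_range p'_range mono by blast
  define L where "L = MU n p p' (lower_complex n)"
  define U where "U = MU n p p' (upper_complex n)"
  have cL: "is_coupling n (lower_measure n p') (lower_measure n p) L"
    unfolding is_coupling_def L_def lower_measure_def
  proof (intro conjI subsetI)
    show "map_pmf fst (MU n p p' (lower_complex n)) = map_pmf (lower_complex n) (random_hypergraph n p')"
      by (rule MU_fst)
    show "map_pmf snd (MU n p p' (lower_complex n)) = map_pmf (lower_complex n) (random_hypergraph n p)"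
      by (rule MU_snd) (rule r)
  next
    fix xy assume "xy \<in> set_pmf (MU n p p' (lower_complex n))"
    then show "xy \<in> pair_space n"
      by (rule MU_set) (auto simp: pair_space_def lower_sub lower_mono)
  qed
  have cU: "is_coupling n (upper_measure n p') (upper_measure n p) U"
    unfolding is_coupling_def U_def upper_measure_def
  proof (intro conjI subsetI)
    show "map_pmf fst (MU n p p' (upper_complex n)) = map_pmf (upper_complex n) (random_hypergraph n p')"
      by (rule MU_fst)
    show "map_pmf snd (MU n p p' (upper_complex n)) = map_pmf (upper_complex n) (random_hypergraph n p)"
      by (rule MU_snd) (rule r)
  next
    fix xy assume "xy \<in> set_pmf (MU n p p' (upper_complex n))"
    then show "xy \<in> pair_space n"
      by (rule MU_set) (auto simp: pair_space_def upper_sub upper_mono)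
  qed
  have B: "\<forall>(X, Y)\<in>set_pmf L. skeleton k X = skeleton k Y"
    if eq: "\<forall>\<sigma>\<in>proper_simplices n. sdim \<sigma> \<le> k \<longrightarrow> p \<sigma> = p' \<sigma>" for k
  proof (intro ballI, clarify)
    fix X Y assume XY: "(X, Y) \<in> set_pmf L"
    then obtain A B where AB: "(X, Y) = (lower_complex n B, lower_complex n A)" "A \<subseteq> B"
      "B \<subseteq> proper_simplices n"
      "\<And>\<sigma>. \<sigma> \<in> proper_simplices n \<Longrightarrow> p \<sigma> = p' \<sigma> \<Longrightarrow> (\<sigma> \<in> A \<longleftrightarrow> \<sigma> \<in> B)"
      using MU_set[of "(X, Y)" n p p' "lower_complex n"] XY unfolding L_def by blast
    have "skeleton k (lower_complex n B) \<subseteq> skeleton k (lower_complex n A)"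
      by (rule lower_skel_half) (use AB eq in auto)
    moreover have "skeleton k (lower_complex n A) \<subseteq> skeleton k (lower_complex n B)"
      by (rule lower_skel_half) (use AB eq in auto)
    ultimately show "skeleton k X = skeleton k Y" using AB(1) by auto
  qed
  have C: "\<forall>(X, Y)\<in>set_pmf U. X - skeleton k X = Y - skeleton k Y"
    if eq: "\<forall>\<sigma>\<in>proper_simplices n. sdim \<sigma> > k \<longrightarrow> p \<sigma> = p' \<sigma>" for k
  proof (intro ballI, clarify)
    fix X Y assume XY: "(X, Y) \<in> set_pmf U"
    then obtain A B where AB: "(X, Y) = (upper_complex n B, upper_complex n A)" "A \<subseteq> B"
      "B \<subseteq> proper_simplices n"
      "\<And>\<sigma>. \<sigma> \<in> proper_simplices n \<Longrightarrow> p \<sigma> = p' \<sigma> \<Longrightarrow> (\<sigma> \<in> A \<longleftrightarrow> \<sigma> \<in> B)"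
      using MU_set[of "(X, Y)" n p p' "upper_complex n"] XY unfolding U_def by blast
    have "upper_complex n B - skeleton k (upper_complex n B)
        \<subseteq> upper_complex n A - skeleton k (upper_complex n A)"
      by (rule upper_skel_half) (use AB eq in auto)
    moreover have "upper_complex n A - skeleton k (upper_complex n A)
        \<subseteq> upper_complex n B - skeleton k (upper_complex n B)"
      by (rule upper_skel_half) (use AB eq in auto)
    ultimately show "X - skeleton k X = Y - skeleton k Y" using AB(1) by auto
  qed
  show ?thesis using cL cU B C by blast
qed

end
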